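(* Let $\mathcal A$ be a cluster algebra and let $\mathcal A(\Sigma_1)\supsetneq\mathcal A(\Sigma_2)\supsetneq\cdots\supsetneq\mathcal A(\Sigma_s)$ be a strictly descending sequence of Galois-like extension subalgebras of $\mathcal A$. Then $\mathrm{Gal}_{\Sigma_1}\mathcal A<\mathrm{Gal}_{\Sigma_2}\mathcal A<\cdots<\mathrm{Gal}_{\Sigma_s}\mathcal A$ is a strictly ascending sequence of subgroups of $\mathrm{Aut}\,\mathcal A$.
   Context: $\mathrm{Aut}\,\mathcal A$: group of cluster automorphisms. Cluster subalgebras $\mathcal A(\Sigma')$ arise from mixing-type sub-seeds of seeds of $\mathcal A$. $\mathrm{Gal}_{\Sigma'}\mathcal A=\{f\in\mathrm{Aut}\,\mathcal A: f|_{\mathcal A(\Sigma')}=\mathrm{id}\}$; $\mathcal A^H=\{z\in\mathcal A: f(z)=z\ \forall f\in H\}$; $\mathcal M^H_{sub}$ is the set of cluster subalgebras $\mathcal A(\Sigma')$ maximal (under inclusion) among cluster subalgebras contained in $\mathcal A^H$ and satisfying $\mathrm{Gal}_{\Sigma'}\mathcal A=H$. A cluster subalgebra is a Galois-like extension subalgebra if it belongs to $\mathcal M^H_{sub}$ for some $H\le\mathrm{Aut}\,\mathcal A$ (necessarily $H=\mathrm{Gal}_{\Sigma'}\mathcal A$). *)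

theory Defs
  imports "HOL-Algebra.Group"
begin

(* Abstract rendering of the data of a cluster algebra A needed for the statement:
   - A       : the carrier of the cluster algebra A (a set of elements of type 'a)
   - Aut     : the cluster automorphisms of A, as maps A -> A (extensional on A)
   - Sub     : the mixing-type sub-seeds of seeds of A
   - CA      : CA sig = the cluster subalgebra A(sig) generated by a sub-seed sig. *)

definition aut_group :: "'a set \<Rightarrow> ('a \<Rightarrow> 'a) set \<Rightarrow> ('a \<Rightarrow> 'a) monoid" where
  "aut_group A Aut = \<lparr>carrier = Aut, mult = (\<lambda>f g. restrict (f \<circ> g) A), one = restrict id A\<rparr>"

definition cluster_setting ::
  "'a set \<Rightarrow> ('a \<Rightarrow> 'a) set \<Rightarrow> 's set \<Rightarrow> ('s \<Rightarrow> 'a set) \<Rightarrow> bool" where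
  "cluster_setting A Aut Sub CA \<longleftrightarrow>
     (\<forall>f\<in>Aut. f \<in> extensional A \<and> bij_betw f A A) \<and>
     group (aut_group A Aut) \<and>
     (\<forall>\<sigma>\<in>Sub. CA \<sigma> \<subseteq> A)"

definition Gal :: "('a \<Rightarrow> 'a) set \<Rightarrow> ('s \<Rightarrow> 'a set) \<Rightarrow> 's \<Rightarrow> ('a \<Rightarrow> 'a) set" where
  "Gal Aut CA \<sigma> = {f \<in> Aut. \<forall>z\<in>CA \<sigma>. f z = z}"

definition fixed_sub :: "'a set \<Rightarrow> ('a \<Rightarrow> 'a) set \<Rightarrow> 'a set" where
  "fixed_sub A H = {z \<in> A. \<forall>f\<in>H. f z = z}"

definition M_sub ::
  "'a set \<Rightarrow> ('a \<Rightarrow> 'a) set \<Rightarrow> 's set \<Rightarrow> ('s \<Rightarrow> 'a set) \<Rightarrow> ('a \<Rightarrow> 'a) set \<Rightarrow> 'a set set" where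
  "M_sub A Aut Sub CA H =
     {CA \<sigma> | \<sigma>. \<sigma> \<in> Sub \<and> CA \<sigma> \<subseteq> fixed_sub A H \<and> Gal Aut CA \<sigma> = H \<and>
        (\<forall>\<tau>\<in>Sub. CA \<tau> \<subseteq> fixed_sub A H \<and> Gal Aut CA \<tau> = H \<and> CA \<sigma> \<subseteq> CA \<tau>
              \<longrightarrow> CA \<tau> = CA \<sigma>)}"

definition galois_like ::
  "'a set \<Rightarrow> ('a \<Rightarrow> 'a) set \<Rightarrow> 's set \<Rightarrow> ('s \<Rightarrow> 'a set) \<Rightarrow> 's \<Rightarrow> bool" where
  "galois_like A Aut Sub CA \<sigma> \<longleftrightarrow>
     (\<exists>H. subgroup H (aut_group A Aut) \<and> CA \<sigma> \<in> M_sub A Aut Sub CA H)"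

end

theory Submission
  imports Defs
begin

lemma Gal_cong: "CA x = CA y \<Longrightarrow> Gal Aut CA x = Gal Aut CA y"
  by (simp add: Gal_def)

lemma gl_unfold:
  assumes "galois_like A Aut Sub CA \<sigma>"
  shows "subgroup (Gal Aut CA \<sigma>) (aut_group A Aut) \<and>
         CA \<sigma> \<subseteq> fixed_sub A (Gal Aut CA \<sigma>) \<and>
         (\<forall>\<tau>\<in>Sub. CA \<tau> \<subseteq> fixed_sub A (Gal Aut CA \<sigma>) \<and> Gal Aut CA \<tau> = Gal Aut CA \<sigma>
              \<and> CA \<sigma> \<subseteq> CA \<tau> \<longrightarrow> CA \<tau> = CA \<sigma>)"
proof -
  obtain H where H: "subgroup H (aut_group A Aut)" "CA \<sigma> \<in> M_sub A Aut Sub CA H"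
    using assms unfolding galois_like_def by blast
  then obtain \<sigma>' where s: "CA \<sigma> = CA \<sigma>'" "CA \<sigma>' \<subseteq> fixed_sub A H" "Gal Aut CA \<sigma>' = H"
     "\<forall>\<tau>\<in>Sub. CA \<tau> \<subseteq> fixed_sub A H \<and> Gal Aut CA \<tau> = H \<and> CA \<sigma>' \<subseteq> CA \<tau>
              \<longrightarrow> CA \<tau> = CA \<sigma>'"
    unfolding M_sub_def by blast
  have "Gal Aut CA \<sigma> = H" using s Gal_cong by metis
  thus ?thesis using s H by simp
qed

theorem mainTheorem12:
  fixes A :: "'a set" and Aut :: "('a \<Rightarrow> 'a) set" and Sub :: "'s set"
    and CA :: "'s \<Rightarrow> 'a set" and \<Sigma> :: "nat \<Rightarrow> 's" and s :: nat
  assumes "cluster_setting A Aut Sub CA"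
    and "\<forall>i<s. \<Sigma> i \<in> Sub \<and> galois_like A Aut Sub CA (\<Sigma> i)"
    and "\<forall>i. Suc i < s \<longrightarrow> CA (\<Sigma> (Suc i)) \<subset> CA (\<Sigma> i)"
  shows "(\<forall>i<s. subgroup (Gal Aut CA (\<Sigma> i)) (aut_group A Aut)) \<and>
         (\<forall>i. Suc i < s \<longrightarrow> Gal Aut CA (\<Sigma> i) \<subset> Gal Aut CA (\<Sigma> (Suc i)))"
proof (intro conjI allI impI)
  fix i assume "i < s" thus "subgroup (Gal Aut CA (\<Sigma> i)) (aut_group A Aut)"
  proof -
    have "galois_like A Aut Sub CA (\<Sigma> i)" using assms(2) \<open>i < s\<close> by simp
    from gl_unfold[OF this] show ?thesis by (rule conjunct1)
  qed
next
  fix i assume i: "Suc i < s"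
  have sub: "CA (\<Sigma> (Suc i)) \<subset> CA (\<Sigma> i)" using assms(3) i by simp
  have le: "Gal Aut CA (\<Sigma> i) \<subseteq> Gal Aut CA (\<Sigma> (Suc i))"
    using psubset_imp_subset[OF sub] unfolding Gal_def by blast
  have g0: "galois_like A Aut Sub CA (\<Sigma> i)" "\<Sigma> i \<in> Sub" using assms(2) i by (simp_all add: Suc_lessD)
  have g1: "galois_like A Aut Sub CA (\<Sigma> (Suc i))" using assms(2) i by simp
  show "Gal Aut CA (\<Sigma> i) \<subset> Gal Aut CA (\<Sigma> (Suc i))"
  proof (rule ccontr)
    assume "\<not> ?thesis"
    hence eq: "Gal Aut CA (\<Sigma> i) = Gal Aut CA (\<Sigma> (Suc i))" using le by (simp add: psubset_eq)
    from gl_unfold[OF g0(1)] have f0: "CA (\<Sigma> i) \<subseteq> fixed_sub A (Gal Aut CA (\<Sigma> i))" by (elim conjE)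
    from gl_unfold[OF g1] have "\<forall>\<tau>\<in>Sub. CA \<tau> \<subseteq> fixed_sub A (Gal Aut CA (\<Sigma> (Suc i))) \<and> Gal Aut CA \<tau> = Gal Aut CA (\<Sigma> (Suc i))
              \<and> CA (\<Sigma> (Suc i)) \<subseteq> CA \<tau> \<longrightarrow> CA \<tau> = CA (\<Sigma> (Suc i))" by (elim conjE)
    hence "CA (\<Sigma> i) \<subseteq> fixed_sub A (Gal Aut CA (\<Sigma> (Suc i))) \<and> Gal Aut CA (\<Sigma> i) = Gal Aut CA (\<Sigma> (Suc i))
              \<and> CA (\<Sigma> (Suc i)) \<subseteq> CA (\<Sigma> i) \<longrightarrow> CA (\<Sigma> i) = CA (\<Sigma> (Suc i))" using g0(2) by (rule bspec)
    moreover have "CA (\<Sigma> (Suc i)) \<subseteq> CA (\<Sigma> i)" using sub by (rule psubset_imp_subset)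
    ultimately have "CA (\<Sigma> i) = CA (\<Sigma> (Suc i))" using f0 eq by simp
    thus False using sub by simp
  qed
qed

end
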